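(* Let $\mathcal{A}$ be a nontrivial abelian group. Let $M_{11}(p_1,p_2)$ be the graph consisting of the $5$-cycle $v_1v_2v_3v_4v_5v_1$ and the triangle $v_1v_6v_7$ (sharing the vertex $v_1$), together with $p_1\ge0$ pendant vertices adjacent to $v_1$ and $p_2\ge 0$ pendant vertices adjacent to $v_2$. Then $M_{11}(p_1,p_2)$ is $\mathcal{A}$-vertex magic if and only if $p_1=p_2=0$. Further, $M_{11}(0,0)$ is group vertex magic.
   Context: A map $\ell:V(G)\to\mathcal{A}\setminus\{0\}$ is an $\mathcal{A}$-vertex magic labeling if there is $\mu\in\mathcal{A}$ with $\sum_{u\in N(v)}\ell(u)=\mu$ for every vertex $v$; $G$ is $\mathcal{A}$-vertex magic if such a labeling exists, and group vertex magic if it is $\mathcal{A}$-vertex magic for every nontrivial abelian group $\mathcal{A}$. A pendant vertex has degree $1$. *)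

theory Defs
  imports Main
begin

definition nbhd :: "'v set \<Rightarrow> ('v \<Rightarrow> 'v \<Rightarrow> bool) \<Rightarrow> 'v \<Rightarrow> 'v set" where
  "nbhd V E v = {u \<in> V. E v u}"

definition is_A_vertex_magic_labeling ::
  "'v set \<Rightarrow> ('v \<Rightarrow> 'v \<Rightarrow> bool) \<Rightarrow> ('v \<Rightarrow> 'a::ab_group_add) \<Rightarrow> bool" where
  "is_A_vertex_magic_labeling V E l \<longleftrightarrow>
     (\<forall>v\<in>V. l v \<noteq> 0) \<and> (\<exists>\<mu>. \<forall>v\<in>V. (\<Sum>u\<in>nbhd V E v. l u) = \<mu>)"

definition A_vertex_magic ::
  "'a::ab_group_add itself \<Rightarrow> 'v set \<Rightarrow> ('v \<Rightarrow> 'v \<Rightarrow> bool) \<Rightarrow> bool" where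
  "A_vertex_magic _ V E \<longleftrightarrow> (\<exists>l :: 'v \<Rightarrow> 'a. is_A_vertex_magic_labeling V E l)"

text \<open>The graph M11(p1,p2) on vertices {1..7+p1+p2}: 5-cycle 1-2-3-4-5-1,
triangle 1-6-7, pendant vertices 8..7+p1 attached to vertex 1 and
pendant vertices 8+p1..7+p1+p2 attached to vertex 2.\<close>

definition M11_V :: "nat \<Rightarrow> nat \<Rightarrow> nat set" where
  "M11_V p1 p2 = {1..7 + p1 + p2}"

definition M11_dir :: "nat \<Rightarrow> nat \<Rightarrow> nat \<Rightarrow> nat \<Rightarrow> bool" where
  "M11_dir p1 p2 u v \<longleftrightarrow>
     (u, v) \<in> {(1,2),(2,3),(3,4),(4,5),(5,1),(1,6),(6,7),(7,1)}
     \<or> (u = 1 \<and> 8 \<le> v \<and> v \<le> 7 + p1)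
     \<or> (u = 2 \<and> 8 + p1 \<le> v \<and> v \<le> 7 + p1 + p2)"

definition M11_E :: "nat \<Rightarrow> nat \<Rightarrow> nat \<Rightarrow> nat \<Rightarrow> bool" where
  "M11_E p1 p2 u v \<longleftrightarrow> M11_dir p1 p2 u v \<or> M11_dir p1 p2 v u"

end

theory Submission
  imports Defs
begin

lemma nb_gen:
  "nbhd (M11_V p1 p2) (M11_E p1 p2) 6 = {1,7}"
  "nbhd (M11_V p1 p2) (M11_E p1 p2) 3 = {2,4}"
  by (auto simp: nbhd_def M11_V_def M11_E_def M11_dir_def)

lemma nb_p1: "p1 > 0 \<Longrightarrow> nbhd (M11_V p1 p2) (M11_E p1 p2) 8 = {1}"
  by (auto simp: nbhd_def M11_V_def M11_E_def M11_dir_def)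

lemma nb_p2: "p2 > 0 \<Longrightarrow> nbhd (M11_V p1 p2) (M11_E p1 p2) (8+p1) = {2}"
  by (auto simp: nbhd_def M11_V_def M11_E_def M11_dir_def)

lemma V00: "M11_V 0 0 = {1,2,3,4,5,6,7}"
  by (auto simp: M11_V_def)

lemma nb00:
  "nbhd (M11_V 0 0) (M11_E 0 0) 1 = {2,5,6,7}"
  "nbhd (M11_V 0 0) (M11_E 0 0) 2 = {1,3}"
  "nbhd (M11_V 0 0) (M11_E 0 0) 3 = {2,4}"
  "nbhd (M11_V 0 0) (M11_E 0 0) 4 = {3,5}"
  "nbhd (M11_V 0 0) (M11_E 0 0) 5 = {1,4}"
  "nbhd (M11_V 0 0) (M11_E 0 0) 6 = {1,7}"
  "nbhd (M11_V 0 0) (M11_E 0 0) 7 = {1,6}"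
  by (auto simp: nbhd_def M11_V_def M11_E_def M11_dir_def)

lemma nb00_1: "nbhd (M11_V 0 0) (M11_E 0 0) (Suc 0) = {2,5,6,7}"
  using nb00(1) by simp

lemma magic00:
  assumes "(a::'c::ab_group_add) \<noteq> 0"
  shows "A_vertex_magic TYPE('c) (M11_V 0 0) (M11_E 0 0)"
proof -
  define l where "l = (\<lambda>v::nat. if v \<in> {1,2,5} then a else - a)"
  have "is_A_vertex_magic_labeling (M11_V 0 0) (M11_E 0 0) l"
    unfolding is_A_vertex_magic_labeling_def
  proof (intro conjI exI[of _ 0])
    show "\<forall>v\<in>M11_V 0 0. l v \<noteq> 0" using assms by (auto simp: V00 l_def)
    show "\<forall>v\<in>M11_V 0 0. (\<Sum>u\<in>nbhd (M11_V 0 0) (M11_E 0 0) v. l u) = 0"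
    proof
      fix v assume "v \<in> M11_V 0 0"
      then have "v \<in> {1,2,3,4,5,6,7}" by (simp add: V00)
      then show "(\<Sum>u\<in>nbhd (M11_V 0 0) (M11_E 0 0) v. l u) = 0"
        by (auto simp: nb00 nb00_1 l_def)
    qed
  qed
  then show ?thesis unfolding A_vertex_magic_def by blast
qed

theorem proposition4p13:
  fixes p1 p2 :: nat
  assumes "\<exists>x :: 'a::ab_group_add. x \<noteq> 0"
  shows "(A_vertex_magic TYPE('a) (M11_V p1 p2) (M11_E p1 p2) \<longleftrightarrow> p1 = 0 \<and> p2 = 0)
     \<and> ((\<exists>y :: 'b::ab_group_add. y \<noteq> 0) \<longrightarrow> A_vertex_magic TYPE('b) (M11_V 0 0) (M11_E 0 0))"
proof (rule conjI, rule iffI, rule_tac [3] impI)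
  assume "\<exists>y :: 'b::ab_group_add. y \<noteq> 0"
  then show "A_vertex_magic TYPE('b) (M11_V 0 0) (M11_E 0 0)" using magic00 by blast
next
  assume "p1 = 0 \<and> p2 = 0"
  then show "A_vertex_magic TYPE('a) (M11_V p1 p2) (M11_E p1 p2)" using magic00 assms by blast
next
  assume "A_vertex_magic TYPE('a) (M11_V p1 p2) (M11_E p1 p2)"
  then obtain l :: "nat \<Rightarrow> 'a" and \<mu> where nz: "\<forall>v\<in>M11_V p1 p2. l v \<noteq> 0"
    and s: "\<forall>v\<in>M11_V p1 p2. (\<Sum>u\<in>nbhd (M11_V p1 p2) (M11_E p1 p2) v. l u) = \<mu>"
    unfolding A_vertex_magic_def is_A_vertex_magic_labeling_def by blast
  have s6: "l 1 + l 7 = \<mu>" using s[rule_format, of 6] by (simp add: nb_gen, simp add: M11_V_def)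
  have s3: "l 2 + l 4 = \<mu>" using s[rule_format, of 3] by (simp add: nb_gen, simp add: M11_V_def)
  have "p1 = 0"
  proof (rule ccontr)
    assume "p1 \<noteq> 0"
    then have "l 1 = \<mu>" using s[rule_format, of 8] by (simp add: nb_p1, simp add: M11_V_def)
    then have "l 7 = 0" using s6 by simp
    then show False using nz by (simp add: M11_V_def)
  qed
  moreover have "p2 = 0"
  proof (rule ccontr)
    assume "p2 \<noteq> 0"
    then have "l 2 = \<mu>" using s[rule_format, of "8+p1"] nb_p2[of p2 p1] by (simp add: M11_V_def)
    then have "l 4 = 0" using s3 by simp
    then show False using nz by (simp add: M11_V_def)
  qed
  ultimately show "p1 = 0 \<and> p2 = 0" by (rule conjI)
qed

end
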